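(* Let $p$ be a prime, $e\geq 2$, and $G$ a finite abelian $p$-group. Let $\overline{f_e}: V(\mathbb{Z}_{p^e}G)\to V(\mathbb{Z}_{p^{e-1}}G)$ be the group homomorphism induced by the ring homomorphism $\mathbb{Z}_{p^e}G\to\mathbb{Z}_{p^{e-1}}G$, $\sum_g a_g g\mapsto \sum_g (a_g \bmod p^{e-1}) g$. Then $\ker(\overline{f_e})=1+p^{e-1}\omega(\mathbb{Z}_{p^e}G)$ is an elementary abelian $p$-group of order $p^{|G|-1}$ and \[ V(\mathbb{Z}_{p^e}G)/\big(1+p^{e-1}\omega(\mathbb{Z}_{p^e}G)\big)\cong V(\mathbb{Z}_{p^{e-1}}G). \]
   Context: $\mathbb{Z}_{p^k}$ is the ring of residues modulo $p^k$. For a commutative ring $R$, $\omega(RG)$ is the augmentation ideal of $RG$ (elements whose coefficients sum to $0$), and $V(RG)=1+\omega(RG)$ is the group of normalized units. $1+p^{e-1}\omega(\mathbb{Z}_{p^e}G)=\{1+p^{e-1}z: z\in\omega(\mathbb{Z}_{p^e}G)\}$. *)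

theory Defs
  imports "HOL-Algebra.Algebra" "HOL-Computational_Algebra.Primes"
begin

text \<open>The group ring Z_m G for a finite group G (HOL-Algebra structure) and a
modulus m: elements are coefficient functions a :: 'a => int, with a g in {0..<m}
for g in carrier G (canonical residues mod m) and a g = 0 outside carrier G.\<close>

definition gr_elems :: "nat \<Rightarrow> ('a, 'b) monoid_scheme \<Rightarrow> ('a \<Rightarrow> int) set" where
  "gr_elems m G = {a. (\<forall>g \<in> carrier G. 0 \<le> a g \<and> a g < int m) \<and> (\<forall>g. g \<notin> carrier G \<longrightarrow> a g = 0)}"

definition gr_mult :: "nat \<Rightarrow> ('a, 'b) monoid_scheme \<Rightarrow> ('a \<Rightarrow> int) \<Rightarrow> ('a \<Rightarrow> int) \<Rightarrow> ('a \<Rightarrow> int)" where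
  "gr_mult m G a b = (\<lambda>g. if g \<in> carrier G
      then (\<Sum>h \<in> carrier G. a h * b (inv\<^bsub>G\<^esub> h \<otimes>\<^bsub>G\<^esub> g)) mod int m else 0)"

definition gr_one :: "nat \<Rightarrow> ('a, 'b) monoid_scheme \<Rightarrow> ('a \<Rightarrow> int)" where
  "gr_one m G = (\<lambda>g. if g = \<one>\<^bsub>G\<^esub> then 1 mod int m else 0)"

definition gr_add :: "nat \<Rightarrow> ('a, 'b) monoid_scheme \<Rightarrow> ('a \<Rightarrow> int) \<Rightarrow> ('a \<Rightarrow> int) \<Rightarrow> ('a \<Rightarrow> int)" where
  "gr_add m G a b = (\<lambda>g. if g \<in> carrier G then (a g + b g) mod int m else 0)"

definition gr_scal :: "nat \<Rightarrow> ('a, 'b) monoid_scheme \<Rightarrow> int \<Rightarrow> ('a \<Rightarrow> int) \<Rightarrow> ('a \<Rightarrow> int)" where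
  "gr_scal m G c a = (\<lambda>g. if g \<in> carrier G then (c * a g) mod int m else 0)"

definition augmentation :: "nat \<Rightarrow> ('a, 'b) monoid_scheme \<Rightarrow> ('a \<Rightarrow> int) \<Rightarrow> int" where
  "augmentation m G a = (\<Sum>g \<in> carrier G. a g) mod int m"

definition aug_ideal :: "nat \<Rightarrow> ('a, 'b) monoid_scheme \<Rightarrow> ('a \<Rightarrow> int) set" where
  "aug_ideal m G = {a \<in> gr_elems m G. augmentation m G a = 0}"

definition V :: "nat \<Rightarrow> ('a, 'b) monoid_scheme \<Rightarrow> ('a \<Rightarrow> int) monoid" where
  "V m G = \<lparr> carrier = {a \<in> gr_elems m G. augmentation m G a = 1 mod int m \<and>
                (\<exists>b \<in> gr_elems m G. gr_mult m G a b = gr_one m G \<and> gr_mult m G b a = gr_one m G)},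
            monoid.mult = gr_mult m G, one = gr_one m G \<rparr>"

definition gr_reduce :: "nat \<Rightarrow> ('a \<Rightarrow> int) \<Rightarrow> ('a \<Rightarrow> int)" where
  "gr_reduce n a = (\<lambda>g. a g mod int n)"

definition one_plus_aug :: "nat \<Rightarrow> nat \<Rightarrow> ('a, 'b) monoid_scheme \<Rightarrow> ('a \<Rightarrow> int) set" where
  "one_plus_aug p e G = {gr_add (p^e) G (gr_one (p^e) G) (gr_scal (p^e) G (int (p^(e-1))) z) | z. z \<in> aug_ideal (p^e) G}"

end

theory Submission
  imports Defs "HOL-Number_Theory.Cong"
begin



definition conv :: "('a,'b) monoid_scheme \<Rightarrow> ('a\<Rightarrow>int) \<Rightarrow> ('a\<Rightarrow>int) \<Rightarrow> 'a \<Rightarrow> int" where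
  "conv G a b g = (\<Sum>h\<in>carrier G. a h * b (inv\<^bsub>G\<^esub> h \<otimes>\<^bsub>G\<^esub> g))"

definition canon :: "nat \<Rightarrow> ('a,'b) monoid_scheme \<Rightarrow> ('a\<Rightarrow>int) \<Rightarrow> 'a \<Rightarrow> int" where
  "canon m G f = (\<lambda>g. if g \<in> carrier G then f g mod int m else 0)"

definition dlt :: "('a,'b) monoid_scheme \<Rightarrow> 'a \<Rightarrow> int" where
  "dlt G = (\<lambda>g. if g = \<one>\<^bsub>G\<^esub> then 1 else 0)"

locale GR = comm_group +
  assumes fin: "finite (carrier G)"
begin

lemma reindex_l:
  assumes h: "h \<in> carrier G"
  shows "(\<Sum>k\<in>carrier G. f k) = (\<Sum>j\<in>carrier G. f (h \<otimes> j))"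
  by (rule sum.reindex_bij_witness[where i="\<lambda>j. h \<otimes> j" and j="\<lambda>k. inv h \<otimes> k"])
     (use h in \<open>auto simp: m_assoc[symmetric]\<close>)

lemma conv_assoc:
  assumes g: "g \<in> carrier G"
  shows "conv G (conv G a b) c g = conv G a (conv G b c) g"
proof -
  have "conv G (conv G a b) c g = (\<Sum>k\<in>carrier G. \<Sum>h\<in>carrier G. a h * b (inv h \<otimes> k) * c (inv k \<otimes> g))"
    by (simp add: conv_def sum_distrib_right)
  also have "\<dots> = (\<Sum>h\<in>carrier G. \<Sum>k\<in>carrier G. a h * b (inv h \<otimes> k) * c (inv k \<otimes> g))"
    by (rule sum.swap)
  also have "\<dots> = (\<Sum>h\<in>carrier G. a h * conv G b c (inv h \<otimes> g))"
  proof (rule sum.cong[OF refl])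
    fix h assume h: "h \<in> carrier G"
    have "(\<Sum>k\<in>carrier G. a h * b (inv h \<otimes> k) * c (inv k \<otimes> g))
        = (\<Sum>j\<in>carrier G. a h * b (inv h \<otimes> (h \<otimes> j)) * c (inv (h \<otimes> j) \<otimes> g))"
      by (rule reindex_l[OF h])
    also have "\<dots> = (\<Sum>j\<in>carrier G. a h * (b j * c (inv j \<otimes> (inv h \<otimes> g))))"
      using h g by (intro sum.cong refl) (simp add: m_assoc[symmetric] inv_mult_group)
    finally show "(\<Sum>k\<in>carrier G. a h * b (inv h \<otimes> k) * c (inv k \<otimes> g)) = a h * conv G b c (inv h \<otimes> g)"
      by (simp add: conv_def sum_distrib_left)
  qed
  finally show ?thesis by (simp add: conv_def)
qed

lemma conv_comm:
  assumes g: "g \<in> carrier G"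
  shows "conv G a b g = conv G b a g"
  unfolding conv_def
proof (rule sum.reindex_bij_witness[where i="\<lambda>j. g \<otimes> inv j" and j="\<lambda>k. inv k \<otimes> g"])
  fix x assume x: "x \<in> carrier G"
  show "g \<otimes> inv (inv x \<otimes> g) = x" using x g
    by (simp add: inv_mult_group m_assoc[symmetric])
  show "inv x \<otimes> g \<in> carrier G" using x g by simp
  show "inv (g \<otimes> inv x) \<otimes> g = x" using x g
    by (simp add: inv_mult_group m_assoc m_comm[of "inv g" g])
  show "g \<otimes> inv x \<in> carrier G" using x g by simp
  have "inv (inv x \<otimes> g) \<otimes> g = x" using x g
    by (simp add: inv_mult_group m_assoc m_lcomm[of "inv g" x g])
  then show "b (inv x \<otimes> g) * a (inv (inv x \<otimes> g) \<otimes> g) = a x * b (inv x \<otimes> g)"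
    by simp
qed

lemma conv_dlt_left:
  assumes g: "g \<in> carrier G"
  shows "conv G (dlt G) b g = b g"
proof -
  have "conv G (dlt G) b g = (\<Sum>h\<in>carrier G. if h = \<one> then b (inv h \<otimes> g) else 0)"
    by (auto simp: conv_def dlt_def intro!: sum.cong)
  also have "\<dots> = b g" using g fin by (simp add: sum.delta)
  finally show ?thesis .
qed

lemma conv_cong:
  assumes "\<forall>g\<in>carrier G. [a g = a' g] (mod m)" "\<forall>g\<in>carrier G. [b g = b' g] (mod m)"
    and g: "g \<in> carrier G"
  shows "[conv G a b g = conv G a' b' g] (mod m)"
  unfolding conv_def using assms
  by (intro cong_sum cong_mult) auto

lemma conv_add_left:
  "conv G (\<lambda>x. a x + a' x) b g = conv G a b g + conv G a' b g"
  by (simp add: conv_def sum.distrib algebra_simps)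

lemma conv_add_right:
  "conv G a (\<lambda>x. b x + b' x) g = conv G a b g + conv G a b' g"
  by (simp add: conv_def sum.distrib algebra_simps)

lemma conv_smult_left:
  "conv G (\<lambda>x. c * a x) b g = c * conv G a b g"
  by (simp add: conv_def sum_distrib_left algebra_simps)

lemma conv_smult_right:
  "conv G a (\<lambda>x. c * b x) g = c * conv G a b g"
  by (simp add: conv_def sum_distrib_left algebra_simps)

lemma sum_conv:
  "(\<Sum>g\<in>carrier G. conv G a b g) = (\<Sum>g\<in>carrier G. a g) * (\<Sum>g\<in>carrier G. b g)"
proof -
  have "(\<Sum>g\<in>carrier G. conv G a b g) = (\<Sum>h\<in>carrier G. \<Sum>g\<in>carrier G. a h * b (inv h \<otimes> g))"
    unfolding conv_def by (rule sum.swap)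
  also have "\<dots> = (\<Sum>h\<in>carrier G. a h * (\<Sum>g\<in>carrier G. b g))"
  proof (rule sum.cong[OF refl])
    fix h assume h: "h \<in> carrier G"
    have "(\<Sum>g\<in>carrier G. a h * b (inv h \<otimes> g)) = (\<Sum>j\<in>carrier G. a h * b (inv h \<otimes> (h \<otimes> j)))"
      by (rule reindex_l[OF h])
    also have "\<dots> = (\<Sum>j\<in>carrier G. a h * b j)"
      using h by (intro sum.cong refl) (simp add: m_assoc[symmetric])
    finally show "(\<Sum>g\<in>carrier G. a h * b (inv h \<otimes> g)) = a h * (\<Sum>g\<in>carrier G. b g)"
      by (simp add: sum_distrib_left)
  qed
  finally show ?thesis by (simp add: sum_distrib_right)
qed

end



definition Rm :: "nat \<Rightarrow> ('a,'b) monoid_scheme \<Rightarrow> ('a\<Rightarrow>int) monoid" where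
  "Rm m G = \<lparr>carrier = gr_elems m G, monoid.mult = gr_mult m G, one = gr_one m G\<rparr>"

context GR begin

lemma gr_mult_canon: "gr_mult m G a b = canon m G (conv G a b)"
  by (simp add: gr_mult_def canon_def conv_def fun_eq_iff)

lemma gr_one_canon: "gr_one m G = canon m G (dlt G)"
  by (auto simp: gr_one_def canon_def dlt_def fun_eq_iff)

lemma canon_in: "m > 0 \<Longrightarrow> canon m G f \<in> gr_elems m G"
  by (auto simp: canon_def gr_elems_def)

lemma elem_canon: "a \<in> gr_elems m G \<Longrightarrow> canon m G a = a"
  by (auto simp: canon_def gr_elems_def fun_eq_iff)

lemma canon_cong: "(\<And>g. g \<in> carrier G \<Longrightarrow> [f g = f' g] (mod int m)) \<Longrightarrow> canon m G f = canon m G f'"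
  by (auto simp: canon_def fun_eq_iff cong_def)

lemma canon_ext: "(\<And>g. g \<in> carrier G \<Longrightarrow> f g = f' g) \<Longrightarrow> canon m G f = canon m G f'"
  by (auto simp: canon_def fun_eq_iff)

lemma cong_canon: "g \<in> carrier G \<Longrightarrow> [canon m G f g = f g] (mod int m)"
  by (simp add: canon_def cong_def)

lemma canon_eq_cong: "canon m G f = canon m G f' \<Longrightarrow> g \<in> carrier G \<Longrightarrow> [f g = f' g] (mod int m)"
  by (auto simp: canon_def fun_eq_iff cong_def dest: spec[of _ g])

lemma canon_conv_l: "canon m G (conv G (canon m G f) h) = canon m G (conv G f h)"
  by (rule canon_cong, rule conv_cong) (auto intro: cong_canon)

lemma canon_conv_r: "canon m G (conv G h (canon m G f)) = canon m G (conv G h f)"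
  by (rule canon_cong, rule conv_cong) (auto intro: cong_canon)

lemma aug_canon: "augmentation m G (canon m G f) = (\<Sum>g\<in>carrier G. f g) mod int m"
proof -
  have "augmentation m G (canon m G f) = (\<Sum>g\<in>carrier G. f g mod int m) mod int m"
    unfolding augmentation_def canon_def by (simp cong: sum.cong)
  also have "\<dots> = (\<Sum>g\<in>carrier G. f g) mod int m" by (rule mod_sum_eq)
  finally show ?thesis .
qed

lemma aug_mult: "augmentation m G (gr_mult m G a b) = (augmentation m G a * augmentation m G b) mod int m"
  by (simp only: gr_mult_canon aug_canon sum_conv) (simp add: augmentation_def mod_mult_eq)

lemma aug_one: "augmentation m G (gr_one m G) = 1 mod int m"
proof -
  have "(\<Sum>g\<in>carrier G. dlt G g) = 1" using fin by (simp add: dlt_def sum.delta)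
  then show ?thesis by (simp add: gr_one_canon aug_canon)
qed

lemma Rm_comm_monoid:
  assumes m: "m > 0" shows "comm_monoid (Rm m G)"
proof (rule comm_monoidI)
  fix x y z assume x: "x \<in> carrier (Rm m G)" and y: "y \<in> carrier (Rm m G)" and z: "z \<in> carrier (Rm m G)"
  show "x \<otimes>\<^bsub>Rm m G\<^esub> y \<in> carrier (Rm m G)"
    using m by (simp add: Rm_def gr_mult_canon canon_in)
  show "x \<otimes>\<^bsub>Rm m G\<^esub> y \<otimes>\<^bsub>Rm m G\<^esub> z = x \<otimes>\<^bsub>Rm m G\<^esub> (y \<otimes>\<^bsub>Rm m G\<^esub> z)"
    by (simp add: Rm_def gr_mult_canon canon_conv_l canon_conv_r conv_assoc cong: canon_ext)
  show "x \<otimes>\<^bsub>Rm m G\<^esub> y = y \<otimes>\<^bsub>Rm m G\<^esub> x"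
    by (simp add: Rm_def gr_mult_canon conv_comm cong: canon_ext)
next
  show "\<one>\<^bsub>Rm m G\<^esub> \<in> carrier (Rm m G)" using m by (simp add: Rm_def gr_one_canon canon_in)
next
  fix x assume x: "x \<in> carrier (Rm m G)"
  then have "canon m G x = x" by (simp add: Rm_def elem_canon)
  then show "\<one>\<^bsub>Rm m G\<^esub> \<otimes>\<^bsub>Rm m G\<^esub> x = x"
    by (simp add: Rm_def gr_mult_canon gr_one_canon canon_conv_l conv_dlt_left cong: canon_ext)
qed

lemma V_carrier_Units: "carrier (V m G) = {a \<in> Units (Rm m G). augmentation m G a = 1 mod int m}"
  by (auto simp: V_def Units_def Rm_def)

lemma V_group:
  assumes m: "m > 0" shows "comm_group (V m G)"
proof -
  interpret R: comm_monoid "Rm m G" by (rule Rm_comm_monoid[OF m])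
  have mult: "monoid.mult (V m G) = monoid.mult (Rm m G)" and one: "one (V m G) = one (Rm m G)"
    by (simp_all add: V_def Rm_def)
  have augR: "augmentation m G (x \<otimes>\<^bsub>Rm m G\<^esub> y) = (augmentation m G x * augmentation m G y) mod int m" for x y
    by (simp add: Rm_def aug_mult)
  have aug_mod: "augmentation m G x mod int m = augmentation m G x" for x
    by (simp add: augmentation_def)
  show ?thesis
  proof (rule comm_groupI)
    fix x y assume x: "x \<in> carrier (V m G)" and y: "y \<in> carrier (V m G)"
    show "x \<otimes>\<^bsub>V m G\<^esub> y \<in> carrier (V m G)"
      using x y by (auto simp: V_carrier_Units mult augR mod_mult_eq)
    show "x \<otimes>\<^bsub>V m G\<^esub> y = y \<otimes>\<^bsub>V m G\<^esub> x"
      using x y by (auto simp: V_carrier_Units mult intro!: R.m_comm)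
  next
    show "\<one>\<^bsub>V m G\<^esub> \<in> carrier (V m G)"
      by (simp add: V_carrier_Units one) (simp add: Rm_def aug_one)
  next
    fix x y z assume x: "x \<in> carrier (V m G)" and y: "y \<in> carrier (V m G)" and z: "z \<in> carrier (V m G)"
    show "x \<otimes>\<^bsub>V m G\<^esub> y \<otimes>\<^bsub>V m G\<^esub> z = x \<otimes>\<^bsub>V m G\<^esub> (y \<otimes>\<^bsub>V m G\<^esub> z)"
      using x y z by (auto simp: V_carrier_Units mult intro!: R.m_assoc)
  next
    fix x assume x: "x \<in> carrier (V m G)"
    then show "\<one>\<^bsub>V m G\<^esub> \<otimes>\<^bsub>V m G\<^esub> x = x"
      by (auto simp: V_carrier_Units mult one)
  next
    fix x assume x: "x \<in> carrier (V m G)"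
    then have xu: "x \<in> Units (Rm m G)" and ax: "augmentation m G x = 1 mod int m"
      by (auto simp: V_carrier_Units)
    let ?y = "inv\<^bsub>Rm m G\<^esub> x"
    have yu: "?y \<in> Units (Rm m G)" using xu by simp
    have yx: "?y \<otimes>\<^bsub>Rm m G\<^esub> x = \<one>\<^bsub>Rm m G\<^esub>" using xu by simp
    have "augmentation m G (?y \<otimes>\<^bsub>Rm m G\<^esub> x) = 1 mod int m"
      by (simp only: yx) (simp add: Rm_def aug_one)
    then have "augmentation m G ?y = 1 mod int m"
      by (simp add: augR ax mod_mult_right_eq aug_mod)
    then have "?y \<in> carrier (V m G)" using yu by (simp add: V_carrier_Units)
    then show "\<exists>y\<in>carrier (V m G). y \<otimes>\<^bsub>V m G\<^esub> x = \<one>\<^bsub>V m G\<^esub>"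
      using yx by (auto simp: mult one)
  qed
qed

end



declare of_nat_power[simp del]

locale GRP = GR +
  fixes p e :: nat
  assumes pr: "Factorial_Ring.prime p" and e2: "e \<ge> 2"
begin

definition opa :: "('a \<Rightarrow> int) \<Rightarrow> 'a \<Rightarrow> int" where
  "opa f = canon (p^e) G (\<lambda>g. dlt G g + int (p^(e-1)) * f g)"

lemma p2: "p \<ge> 2" using pr by (simp add: prime_ge_2_nat)

lemma M_eq: "int (p^e) = int (p^(e-1)) * int p"
proof -
  have "p^e = p^(e-1) * p" using e2 power_minus_mult[of e p] by simp
  then show ?thesis by simp
qed

lemma N2: "p^(e-1) \<ge> 2"
proof -
  have "p^(e-1) \<ge> p^1" using p2 e2 by (intro power_increasing) auto
  then show ?thesis using p2 by simp
qed

lemma Mpos: "p^e > 0" using p2 by simp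

lemma dvdNN: "int (p^e) dvd int (p^(e-1)) * int (p^(e-1))"
proof -
  have "p^e dvd p^(e-1 + (e-1))" using e2 by (intro le_imp_power_dvd) auto
  then show ?thesis by (simp add: power_add flip: of_nat_mult)
qed

lemma NdvdM: "int (p^(e-1)) dvd int (p^e)" by (simp add: M_eq)

lemma sum_dlt: "(\<Sum>g\<in>carrier G. dlt G g) = 1" using fin by (simp add: dlt_def sum.delta)

lemma cong_scale: "[a = b] (mod (q::int)) \<Longrightarrow> [c*a = c*b] (mod c*q)"
  by (simp add: cong_def mod_mult_mult1)

lemma opa_cong: "(\<And>g. g \<in> carrier G \<Longrightarrow> [f g = f' g] (mod int p)) \<Longrightarrow> opa f = opa f'"
  unfolding opa_def
  by (rule canon_cong) (simp add: M_eq cong_add cong_scale)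

lemma one_plus_aug_eq: "one_plus_aug p e G = opa ` aug_ideal (p^e) G"
proof -
  have "gr_add (p^e) G (gr_one (p^e) G) (gr_scal (p^e) G (int (p^(e-1))) z) = opa z" for z
    by (auto simp: fun_eq_iff gr_add_def gr_one_def gr_scal_def opa_def canon_def dlt_def mod_add_eq)
  then show ?thesis unfolding one_plus_aug_def by auto
qed

lemma aug_ideal_dvd: "z \<in> aug_ideal (p^e) G \<Longrightarrow> int p dvd (\<Sum>g\<in>carrier G. z g)"
  unfolding aug_ideal_def augmentation_def
  by (auto simp: M_eq dest!: mod_0_imp_dvd intro: dvd_mult_left)

lemma opa_mem:
  assumes "int p dvd (\<Sum>g\<in>carrier G. f g)"
  shows "opa f \<in> one_plus_aug p e G"
proof -
  let ?S = "\<Sum>g\<in>carrier G. f g"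
  define z where "z = canon (p^e) G (\<lambda>g. f g - ?S * dlt G g)"
  have "(\<Sum>g\<in>carrier G. f g - ?S * dlt G g) = 0"
    by (simp add: sum_subtractf sum_distrib_left[symmetric] sum_dlt)
  then have "z \<in> aug_ideal (p^e) G"
    using Mpos by (simp add: z_def aug_ideal_def canon_in aug_canon)
  moreover have "opa z = opa f"
  proof (rule opa_cong)
    fix g assume g: "g \<in> carrier G"
    have "[z g = f g - ?S * dlt G g] (mod int (p^e))" unfolding z_def by (rule cong_canon[OF g])
    then have "[z g = f g - ?S * dlt G g] (mod int p)" by (rule cong_dvd_modulus) (simp add: M_eq)
    moreover have "[f g - ?S * dlt G g = f g] (mod int p)"
      using assms by (simp add: cong_iff_dvd_diff)
    ultimately show "[z g = f g] (mod int p)" by (rule cong_trans)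
  qed
  ultimately show ?thesis unfolding one_plus_aug_eq by (metis image_eqI)
qed

lemma conv_dlt_right: "g \<in> carrier G \<Longrightarrow> conv G a (dlt G) g = a g"
  by (subst conv_comm) (simp_all add: conv_dlt_left)

lemma conv_opa:
  assumes g: "g \<in> carrier G"
  shows "[conv G (\<lambda>x. dlt G x + int (p^(e-1)) * f x) (\<lambda>x. dlt G x + int (p^(e-1)) * h x) g
          = dlt G g + int (p^(e-1)) * (f g + h g)] (mod int (p^e))"
proof -
  let ?N = "int (p^(e-1))"
  have "conv G (\<lambda>x. dlt G x + ?N * f x) (\<lambda>x. dlt G x + ?N * h x) g
      = dlt G g + ?N * h g + ?N * f g + ?N * ?N * conv G f h g"
  proof -
    have "conv G (\<lambda>x. dlt G x + ?N * f x) (\<lambda>x. dlt G x + ?N * h x) g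
      = conv G (dlt G) (dlt G) g + conv G (dlt G) (\<lambda>x. ?N * h x) g
        + (conv G (\<lambda>x. ?N * f x) (dlt G) g + conv G (\<lambda>x. ?N * f x) (\<lambda>x. ?N * h x) g)"
      by (simp only: conv_add_left conv_add_right)
    also have "conv G (\<lambda>x. ?N * f x) (\<lambda>x. ?N * h x) g = ?N * (?N * conv G f h g)"
      by (simp only: conv_smult_left conv_smult_right)
    also have "conv G (\<lambda>x. ?N * f x) (dlt G) g = ?N * f g"
      by (simp only: conv_smult_left conv_dlt_right[OF g])
    also have "conv G (dlt G) (\<lambda>x. ?N * h x) g = ?N * h g"
      by (simp only: conv_dlt_left[OF g])
    also have "conv G (dlt G) (dlt G) g = dlt G g"
      by (simp only: conv_dlt_left[OF g])
    finally show ?thesis by (simp add: algebra_simps)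
  qed
  moreover have "[dlt G g + ?N * h g + ?N * f g + ?N * ?N * conv G f h g
      = dlt G g + ?N * (f g + h g)] (mod int (p^e))"
  proof -
    have "[?N * ?N * conv G f h g = 0] (mod int (p^e))"
      using dvdNN by (simp add: cong_0_iff)
    then have "[dlt G g + ?N * h g + ?N * f g + ?N * ?N * conv G f h g
      = dlt G g + ?N * h g + ?N * f g + 0] (mod int (p^e))"
      by (intro cong_add cong_refl)
    then show ?thesis by (simp add: algebra_simps)
  qed
  ultimately show ?thesis by simp
qed

lemma opa_mult: "gr_mult (p^e) G (opa f) (opa h) = opa (\<lambda>g. f g + h g)"
  unfolding gr_mult_canon opa_def canon_conv_l canon_conv_r
  by (rule canon_cong) (rule conv_opa)

lemma opa_zero: "opa (\<lambda>g. 0) = gr_one (p^e) G"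
  by (simp add: opa_def gr_one_canon)

lemma opa_in_V:
  assumes "int p dvd (\<Sum>g\<in>carrier G. f g)"
  shows "opa f \<in> carrier (V (p^e) G)"
proof -
  have el: "opa h \<in> gr_elems (p^e) G" for h using Mpos by (simp add: opa_def canon_in)
  have "[int (p^(e-1)) * (\<Sum>g\<in>carrier G. f g) = 0] (mod int (p^e))"
    using assms by (auto simp: M_eq cong_0_iff)
  then have "[1 + int (p^(e-1)) * (\<Sum>g\<in>carrier G. f g) = 1 + 0] (mod int (p^e))"
    by (intro cong_add cong_refl)
  then have aug: "augmentation (p^e) G (opa f) = 1 mod int (p^e)"
    by (simp add: opa_def aug_canon sum.distrib sum_dlt sum_distrib_left[symmetric] cong_def)
  have "gr_mult (p^e) G (opa f) (opa (\<lambda>g. - f g)) = gr_one (p^e) G"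
       "gr_mult (p^e) G (opa (\<lambda>g. - f g)) (opa f) = gr_one (p^e) G"
    by (simp_all add: opa_mult flip: opa_zero)
  then show ?thesis using el aug by (auto simp: V_def)
qed

lemma red_canon: "gr_reduce (p^(e-1)) (canon (p^e) G f) = canon (p^(e-1)) G f"
  using NdvdM by (auto simp: gr_reduce_def canon_def fun_eq_iff mod_mod_cancel)

lemma red_elem: "a \<in> gr_elems (p^e) G \<Longrightarrow> gr_reduce (p^(e-1)) a = canon (p^(e-1)) G a"
  by (metis elem_canon red_canon)

lemma red_mult: "gr_reduce (p^(e-1)) (gr_mult (p^e) G a b)
   = gr_mult (p^(e-1)) G (canon (p^(e-1)) G a) (canon (p^(e-1)) G b)"
  unfolding gr_mult_canon red_canon canon_conv_l canon_conv_r ..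

lemma red_one: "gr_reduce (p^(e-1)) (gr_one (p^e) G) = gr_one (p^(e-1)) G"
  unfolding gr_one_canon red_canon ..

end



context GRP begin

lemma V_mult: "monoid.mult (V m G) = gr_mult m G" and V_one: "one (V m G) = gr_one m G"
  by (simp_all add: V_def)

lemma Npos: "p^(e-1) > 0" using p2 by simp

lemma red_V:
  assumes a: "a \<in> carrier (V (p^e) G)"
  shows "gr_reduce (p^(e-1)) a \<in> carrier (V (p^(e-1)) G)"
proof -
  from a obtain b where ael: "a \<in> gr_elems (p^e) G" and aug: "augmentation (p^e) G a = 1 mod int (p^e)"
    and bel: "b \<in> gr_elems (p^e) G" and ab: "gr_mult (p^e) G a b = gr_one (p^e) G"
    and ba: "gr_mult (p^e) G b a = gr_one (p^e) G"
    by (auto simp: V_def)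
  have ra: "gr_reduce (p^(e-1)) a = canon (p^(e-1)) G a" by (rule red_elem[OF ael])
  have "[(\<Sum>g\<in>carrier G. a g) = 1] (mod int (p^e))"
    using aug by (simp add: augmentation_def cong_def)
  then have "[(\<Sum>g\<in>carrier G. a g) = 1] (mod int (p^(e-1)))"
    by (rule cong_dvd_modulus) (rule NdvdM)
  then have augN: "augmentation (p^(e-1)) G (canon (p^(e-1)) G a) = 1 mod int (p^(e-1))"
    by (simp add: aug_canon cong_def)
  have "gr_mult (p^(e-1)) G (canon (p^(e-1)) G a) (canon (p^(e-1)) G b) = gr_one (p^(e-1)) G"
       "gr_mult (p^(e-1)) G (canon (p^(e-1)) G b) (canon (p^(e-1)) G a) = gr_one (p^(e-1)) G"
    by (simp_all only: red_mult[symmetric] ab ba red_one)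
  moreover have "canon (p^(e-1)) G b \<in> gr_elems (p^(e-1)) G" "canon (p^(e-1)) G a \<in> gr_elems (p^(e-1)) G"
    using Npos by (simp_all add: canon_in)
  ultimately show ?thesis using augN ra by (auto simp: V_def)
qed

lemma red_hom: "gr_reduce (p^(e-1)) \<in> hom (V (p^e) G) (V (p^(e-1)) G)"
proof -
  have "gr_reduce (p^(e-1)) (gr_mult (p^e) G a b)
      = gr_mult (p^(e-1)) G (gr_reduce (p^(e-1)) a) (gr_reduce (p^(e-1)) b)"
    if "a \<in> carrier (V (p^e) G)" "b \<in> carrier (V (p^e) G)" for a b
  proof -
    have "a \<in> gr_elems (p^e) G" "b \<in> gr_elems (p^e) G" using that by (auto simp: V_def)
    then show ?thesis by (simp only: red_mult red_elem)
  qed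
  then show ?thesis using red_V by (auto simp: hom_def V_mult)
qed

lemma red_opa: "gr_reduce (p^(e-1)) (opa z) = gr_one (p^(e-1)) G"
  unfolding opa_def red_canon gr_one_canon
  by (rule canon_cong) (simp add: cong_iff_dvd_diff)

lemma kernel_eq: "kernel (V (p^e) G) (V (p^(e-1)) G) (gr_reduce (p^(e-1))) = one_plus_aug p e G"
proof
  show "one_plus_aug p e G \<subseteq> kernel (V (p^e) G) (V (p^(e-1)) G) (gr_reduce (p^(e-1)))"
  proof
    fix x assume "x \<in> one_plus_aug p e G"
    then obtain z where z: "z \<in> aug_ideal (p^e) G" and x: "x = opa z" by (auto simp: one_plus_aug_eq)
    show "x \<in> kernel (V (p^e) G) (V (p^(e-1)) G) (gr_reduce (p^(e-1)))"
      using opa_in_V[OF aug_ideal_dvd[OF z]] red_opa x by (simp add: kernel_def V_one)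
  qed
next
  show "kernel (V (p^e) G) (V (p^(e-1)) G) (gr_reduce (p^(e-1))) \<subseteq> one_plus_aug p e G"
  proof
    fix a assume "a \<in> kernel (V (p^e) G) (V (p^(e-1)) G) (gr_reduce (p^(e-1)))"
    then have aV: "a \<in> carrier (V (p^e) G)" and ra: "gr_reduce (p^(e-1)) a = gr_one (p^(e-1)) G"
      by (auto simp: kernel_def V_one)
    then have ael: "a \<in> gr_elems (p^e) G" and aug: "augmentation (p^e) G a = 1 mod int (p^e)"
      by (auto simp: V_def)
    let ?N = "int (p^(e-1))"
    define w where "w g = (a g - dlt G g) div ?N" for g
    have ceq: "canon (p^(e-1)) G a = canon (p^(e-1)) G (dlt G)"
      using ra unfolding red_elem[OF ael] gr_one_canon .
    have aw: "a g = dlt G g + ?N * w g" if g: "g \<in> carrier G" for g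
    proof -
      have "[a g = dlt G g] (mod ?N)" by (rule canon_eq_cong[OF ceq g])
      then have "?N dvd a g - dlt G g" by (simp add: cong_iff_dvd_diff)
      then show ?thesis by (simp add: w_def)
    qed
    have "opa w = canon (p^e) G a" unfolding opa_def by (rule canon_ext) (simp add: aw)
    then have aopa: "a = opa w" using elem_canon[OF ael] by simp
    have "(\<Sum>g\<in>carrier G. a g) = 1 + ?N * (\<Sum>g\<in>carrier G. w g)"
      by (simp add: aw sum.distrib sum_dlt sum_distrib_left)
    with aug have "[1 + ?N * (\<Sum>g\<in>carrier G. w g) = 1 + 0] (mod int (p^e))"
      by (simp add: augmentation_def cong_def)
    then have "[?N * (\<Sum>g\<in>carrier G. w g) = 0] (mod int (p^e))"
      by (metis cong_add_lcancel)
    then have "?N * int p dvd ?N * (\<Sum>g\<in>carrier G. w g)" by (simp add: cong_0_iff M_eq)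
    then have "int p dvd (\<Sum>g\<in>carrier G. w g)" using Npos p2 by simp
    then show "a \<in> one_plus_aug p e G" using opa_mem aopa by simp
  qed
qed

lemma opa_pow: "opa z [^]\<^bsub>V (p^e) G\<^esub> k = opa (\<lambda>g. int k * z g)"
proof (induction k)
  case 0
  then show ?case by (simp add: V_one opa_zero)
next
  case (Suc k)
  then show ?case by (simp add: V_mult opa_mult algebra_simps)
qed

lemma opa_pow_p: "opa z [^]\<^bsub>V (p^e) G\<^esub> p = \<one>\<^bsub>V (p^e) G\<^esub>"
proof -
  have "opa (\<lambda>g. int p * z g) = opa (\<lambda>g. 0)" by (rule opa_cong) (simp add: cong_0_iff)
  then show ?thesis by (simp add: opa_pow V_one opa_zero)
qed

end



context GRP begin

definition Sset :: "('a \<Rightarrow> int) set" where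
  "Sset = {w \<in> carrier G \<rightarrow>\<^sub>E {0..<int p}. int p dvd (\<Sum>g\<in>carrier G. w g)}"

lemma opa_S: "one_plus_aug p e G = opa ` Sset"
proof
  show "opa ` Sset \<subseteq> one_plus_aug p e G" using opa_mem by (auto simp: Sset_def)
next
  show "one_plus_aug p e G \<subseteq> opa ` Sset"
  proof
    fix x assume "x \<in> one_plus_aug p e G"
    then obtain z where z: "z \<in> aug_ideal (p^e) G" and x: "x = opa z" by (auto simp: one_plus_aug_eq)
    define w where "w = restrict (\<lambda>g. z g mod int p) (carrier G)"
    have "(\<Sum>g\<in>carrier G. w g) mod int p = (\<Sum>g\<in>carrier G. z g mod int p) mod int p"
      by (simp add: w_def)
    also have "\<dots> = (\<Sum>g\<in>carrier G. z g) mod int p" by (rule mod_sum_eq)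
    also have "\<dots> = 0" using aug_ideal_dvd[OF z] by simp
    finally have "w \<in> Sset" using p2 by (auto simp: Sset_def w_def)
    moreover have "opa z = opa w"
      by (rule opa_cong) (simp add: w_def cong_def)
    ultimately show "x \<in> opa ` Sset" using x by auto
  qed
qed

lemma opa_val:
  assumes g: "g \<in> carrier G" and w: "0 \<le> w g" "w g < int p"
  shows "opa w g = dlt G g + int (p^(e-1)) * w g"
proof -
  let ?N = "int (p^(e-1))"
  have "w g \<le> int p - 1" using w by simp
  then have "?N * w g \<le> ?N * (int p - 1)" by (intro mult_left_mono) auto
  then have "?N * w g \<le> int (p^e) - ?N" by (simp add: M_eq algebra_simps)
  moreover have "dlt G g \<le> 1" "0 \<le> dlt G g" by (auto simp: dlt_def)
  moreover have "0 \<le> ?N * w g" using w by simp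
  moreover have "?N \<ge> 2" using N2 by linarith
  ultimately have "0 \<le> dlt G g + ?N * w g" "dlt G g + ?N * w g < int (p^e)" by linarith+
  then show ?thesis using g by (simp add: opa_def canon_def)
qed

lemma inj_S: "inj_on opa Sset"
proof (rule inj_onI)
  fix w w' assume w: "w \<in> Sset" and w': "w' \<in> Sset" and eq: "opa w = opa w'"
  show "w = w'"
  proof (rule PiE_ext)
    show "w \<in> carrier G \<rightarrow>\<^sub>E {0..<int p}" "w' \<in> carrier G \<rightarrow>\<^sub>E {0..<int p}" using w w' by (auto simp: Sset_def)
    fix g assume g: "g \<in> carrier G"
    then have "w g \<in> {0..<int p}" "w' g \<in> {0..<int p}" using w w' by (auto simp: Sset_def)
    then have "dlt G g + int (p^(e-1)) * w g = dlt G g + int (p^(e-1)) * w' g"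
      using eq opa_val[OF g] by (metis atLeastLessThan_iff)
    then show "w g = w' g" using Npos p2 by simp
  qed
qed

lemma card_S: "card Sset = p ^ (card (carrier G) - 1)"
proof -
  let ?T = "carrier G - {\<one>} \<rightarrow>\<^sub>E {0..<int p}"
  let ?f = "\<lambda>w. restrict w (carrier G - {\<one>})"
  let ?f' = "\<lambda>v. v(\<one> := (- (\<Sum>g\<in>carrier G - {\<one>}. v g)) mod int p)"
  have sumrem: "(\<Sum>g\<in>carrier G. w g) = w \<one> + (\<Sum>g\<in>carrier G - {\<one>}. w g)" for w :: "'a \<Rightarrow> int"
    using fin by (simp add: sum.remove)
  have "bij_betw ?f Sset ?T"
  proof (rule bij_betw_byWitness[where f'="?f'"])
    show "\<forall>a\<in>Sset. ?f' (?f a) = a"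
    proof
      fix w assume w: "w \<in> Sset"
      then have wP: "w \<in> carrier G \<rightarrow>\<^sub>E {0..<int p}" and dv: "int p dvd (\<Sum>g\<in>carrier G. w g)"
        by (auto simp: Sset_def)
      have "w \<one> \<in> {0..<int p}" using wP by auto
      then have "w \<one> = w \<one> mod int p" by simp
      also have "\<dots> = (- (\<Sum>g\<in>carrier G - {\<one>}. w g)) mod int p"
        using dv unfolding sumrem by (simp add: mod_eq_dvd_iff)
      finally have w1: "w \<one> = (- (\<Sum>g\<in>carrier G - {\<one>}. w g)) mod int p" .
      show "?f' (?f w) = w"
      proof
        fix g show "?f' (?f w) g = w g"
          using w1 PiE_arb[OF wP, of g] by (cases "g = \<one>") (auto simp: restrict_def)
      qed
    qed
    show "\<forall>a\<in>?T. ?f (?f' a) = a"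
    proof
      fix v assume v: "v \<in> ?T"
      show "?f (?f' v) = v"
      proof
        fix g show "?f (?f' v) g = v g" using PiE_arb[OF v, of g] by (auto simp: restrict_def)
      qed
    qed
    show "?f ` Sset \<subseteq> ?T"
    proof
      fix x assume "x \<in> ?f ` Sset"
      then obtain w where w: "w \<in> Sset" and x: "x = ?f w" by auto
      then have "\<forall>g\<in>carrier G. w g \<in> {0..<int p}" by (auto simp: Sset_def PiE_iff)
      then show "x \<in> ?T" unfolding x restrict_PiE_iff by blast
    qed
    show "?f' ` ?T \<subseteq> Sset"
    proof
      fix x assume "x \<in> ?f' ` ?T"
      then obtain v where v: "v \<in> ?T" and x: "x = ?f' v" by auto
      have "x \<in> carrier G \<rightarrow>\<^sub>E {0..<int p}"
      proof (unfold PiE_iff, intro conjI ballI)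
        fix g assume g: "g \<in> carrier G"
        show "x g \<in> {0..<int p}"
        proof (cases "g = \<one>")
          case True then show ?thesis using p2 by (simp add: x)
        next
          case False then show ?thesis using PiE_mem[OF v, of g] g by (simp add: x)
        qed
      next
        show "x \<in> extensional (carrier G)"
          unfolding extensional_def
        proof (intro CollectI allI impI)
          fix g assume g: "g \<notin> carrier G"
          then have "g \<noteq> \<one>" by auto
          then have "x g = v g" by (simp add: x)
          also have "\<dots> = undefined" using g by (intro PiE_arb[OF v]) auto
          finally show "x g = undefined" .
        qed
      qed
      moreover have "int p dvd (\<Sum>g\<in>carrier G. x g)"
      proof -
        let ?R = "\<Sum>g\<in>carrier G - {\<one>}. v g"
        have s1: "(\<Sum>g\<in>carrier G - {\<one>}. x g) = ?R" by (rule sum.cong) (simp_all add: x)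
        have x1: "x \<one> = (- ?R) mod int p" by (simp add: x)
        have sx: "(\<Sum>g\<in>carrier G. x g) = (- ?R) mod int p + ?R" by (simp only: sumrem s1 x1)
        have "((- ?R) mod int p + ?R) mod int p = (- ?R + ?R) mod int p" by (rule mod_add_left_eq)
        then show ?thesis unfolding sx by (metis add.left_inverse mod_0 dvd_eq_mod_eq_0)
      qed
      ultimately show "x \<in> Sset" unfolding Sset_def by blast
    qed
  qed
  then have "card Sset = card ?T" by (rule bij_betw_same_card)
  also have "\<dots> = p ^ card (carrier G - {\<one>})" using fin by (simp add: card_PiE)
  also have "\<dots> = p ^ (card (carrier G) - 1)" using fin by (simp add: card_Diff_singleton)
  finally show ?thesis .
qed

lemma card_opa: "card (one_plus_aug p e G) = p ^ (card (carrier G) - 1)"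
  by (simp add: opa_S card_image[OF inj_S] card_S)

end



context GRP begin

lemma conv_ext_l: "(\<And>x. x \<in> carrier G \<Longrightarrow> f x = f' x) \<Longrightarrow> conv G f h g = conv G f' h g"
  by (simp add: conv_def)

lemma red_surj: "gr_reduce (p^(e-1)) ` carrier (V (p^e) G) = carrier (V (p^(e-1)) G)"
proof
  show "gr_reduce (p^(e-1)) ` carrier (V (p^e) G) \<subseteq> carrier (V (p^(e-1)) G)" using red_V by auto
next
  show "carrier (V (p^(e-1)) G) \<subseteq> gr_reduce (p^(e-1)) ` carrier (V (p^e) G)"
  proof
    fix b assume "b \<in> carrier (V (p^(e-1)) G)"
    then obtain c where bel: "b \<in> gr_elems (p^(e-1)) G" and augb: "augmentation (p^(e-1)) G b = 1 mod int (p^(e-1))"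
      and cel: "c \<in> gr_elems (p^(e-1)) G" and bc: "gr_mult (p^(e-1)) G b c = gr_one (p^(e-1)) G"
      by (auto simp: V_def)
    let ?N = "int (p^(e-1))" and ?M = "int (p^e)"
    let ?s = "\<Sum>g\<in>carrier G. b g"
    define a where "a = canon (p^e) G (\<lambda>g. b g + (1 - ?s) * dlt G g)"
    have sc: "[?s = 1] (mod ?N)" using augb by (simp add: augmentation_def cong_def)
    then have "?N dvd 1 - ?s" by (metis cong_iff_dvd_diff cong_sym)
    then have "canon (p^(e-1)) G (\<lambda>g. b g + (1 - ?s) * dlt G g) = canon (p^(e-1)) G b"
      by (intro canon_cong) (simp add: cong_iff_dvd_diff)
    then have ra: "gr_reduce (p^(e-1)) a = b"
      unfolding a_def red_canon elem_canon[OF bel] .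
    have ael: "a \<in> gr_elems (p^e) G" using Mpos by (simp add: a_def canon_in)
    have "(\<Sum>g\<in>carrier G. b g + (1 - ?s) * dlt G g) = 1"
      by (simp add: sum.distrib sum_distrib_left[symmetric] sum_dlt)
    then have auga: "augmentation (p^e) G a = 1 mod ?M" by (simp add: a_def aug_canon)
    let ?u = "conv G a c"
    have "canon (p^(e-1)) G ?u = gr_one (p^(e-1)) G"
    proof -
      have "canon (p^(e-1)) G ?u = canon (p^(e-1)) G (conv G (canon (p^(e-1)) G a) (canon (p^(e-1)) G c))"
        by (simp only: canon_conv_l canon_conv_r)
      also have "\<dots> = gr_mult (p^(e-1)) G b c"
        using ra red_elem[OF ael] elem_canon[OF cel] by (simp add: gr_mult_canon)
      finally show ?thesis using bc by simp
    qed
    then have ceq: "canon (p^(e-1)) G ?u = canon (p^(e-1)) G (dlt G)" by (simp add: gr_one_canon)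
    define r where "r g = (?u g - dlt G g) div ?N" for g
    have ur: "?u g = dlt G g + ?N * r g" if g: "g \<in> carrier G" for g
    proof -
      have "[?u g = dlt G g] (mod ?N)" by (rule canon_eq_cong[OF ceq g])
      then have "?N dvd ?u g - dlt G g" by (simp add: cong_iff_dvd_diff)
      then show ?thesis by (simp add: r_def)
    qed
    define hh where "hh = (\<lambda>g. dlt G g + ?N * (- r g))"
    define a' where "a' = canon (p^e) G (conv G c hh)"
    have a'el: "a' \<in> gr_elems (p^e) G" using Mpos by (simp add: a'_def canon_in)
    have aa': "gr_mult (p^e) G a a' = gr_one (p^e) G"
    proof -
      have "gr_mult (p^e) G a a' = canon (p^e) G (conv G a (conv G c hh))"
        by (simp add: a'_def gr_mult_canon canon_conv_r)
      also have "\<dots> = canon (p^e) G (conv G ?u hh)"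
        by (rule canon_ext) (simp add: conv_assoc)
      also have "\<dots> = canon (p^e) G (conv G (\<lambda>x. dlt G x + ?N * r x) hh)"
        by (rule canon_ext, rule conv_ext_l) (simp add: ur)
      also have "\<dots> = canon (p^e) G (\<lambda>g. dlt G g + ?N * (r g + - r g))"
        unfolding hh_def by (rule canon_cong) (rule conv_opa)
      also have "\<dots> = gr_one (p^e) G" by (simp add: gr_one_canon)
      finally show ?thesis .
    qed
    have a'a: "gr_mult (p^e) G a' a = gr_one (p^e) G"
    proof -
      have "gr_mult (p^e) G a' a = gr_mult (p^e) G a a'"
        by (simp add: gr_mult_canon conv_comm cong: canon_ext)
      then show ?thesis using aa' by simp
    qed
    have "a \<in> carrier (V (p^e) G)" using ael auga a'el aa' a'a by (auto simp: V_def)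
    then show "b \<in> gr_reduce (p^(e-1)) ` carrier (V (p^e) G)" using ra by (metis image_eqI)
  qed
qed

end



theorem lemma6:
  fixes G :: "('a, 'b) monoid_scheme" and p e :: nat
  assumes "Factorial_Ring.prime p" and "e \<ge> 2"
    and "comm_group G" and "finite (carrier G)"
    and "\<exists>k. card (carrier G) = p ^ k"
  shows "gr_reduce (p^(e-1)) \<in> hom (V (p^e) G) (V (p^(e-1)) G)
    \<and> kernel (V (p^e) G) (V (p^(e-1)) G) (gr_reduce (p^(e-1))) = one_plus_aug p e G
    \<and> subgroup (one_plus_aug p e G) (V (p^e) G)
    \<and> comm_group ((V (p^e) G)\<lparr>carrier := one_plus_aug p e G\<rparr>)
    \<and> (\<forall>x \<in> one_plus_aug p e G. x [^]\<^bsub>V (p^e) G\<^esub> p = \<one>\<^bsub>V (p^e) G\<^esub>)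
    \<and> card (one_plus_aug p e G) = p ^ (card (carrier G) - 1)
    \<and> (V (p^e) G) Mod (one_plus_aug p e G) \<cong> V (p^(e-1)) G"
proof -
  interpret GRP G p e
    using assms by (intro GRP.intro GR.intro GR_axioms.intro GRP_axioms.intro) auto
  have cM: "comm_group (V (p^e) G)" by (rule V_group[OF Mpos])
  have cN: "comm_group (V (p^(e-1)) G)" by (rule V_group[OF Npos])
  have gM: "group (V (p^e) G)" using cM by (simp add: comm_group_def)
  have gN: "group (V (p^(e-1)) G)" using cN by (simp add: comm_group_def)
  have gh: "group_hom (V (p^e) G) (V (p^(e-1)) G) (gr_reduce (p^(e-1)))"
    by (intro group_hom.intro group_hom_axioms.intro gM gN red_hom)
  have sub: "subgroup (one_plus_aug p e G) (V (p^e) G)"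
    using group_hom.subgroup_kernel[OF gh] kernel_eq by simp
  have cs: "comm_group ((V (p^e) G)\<lparr>carrier := one_plus_aug p e G\<rparr>)"
  proof (rule group.group_comm_groupI)
    show "group ((V (p^e) G)\<lparr>carrier := one_plus_aug p e G\<rparr>)"
      by (rule subgroup.subgroup_is_group[OF sub gM])
    fix x y assume "x \<in> carrier ((V (p^e) G)\<lparr>carrier := one_plus_aug p e G\<rparr>)"
      "y \<in> carrier ((V (p^e) G)\<lparr>carrier := one_plus_aug p e G\<rparr>)"
    then have "x \<in> carrier (V (p^e) G)" "y \<in> carrier (V (p^e) G)"
      using subgroup.subset[OF sub] by auto
    then show "x \<otimes>\<^bsub>(V (p^e) G)\<lparr>carrier := one_plus_aug p e G\<rparr>\<^esub> y
             = y \<otimes>\<^bsub>(V (p^e) G)\<lparr>carrier := one_plus_aug p e G\<rparr>\<^esub> x"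
    proof -
      have "comm_monoid (V (p^e) G)" using cM by (simp add: comm_group_def)
      then show ?thesis using comm_monoid.m_comm \<open>x \<in> carrier (V (p^e) G)\<close> \<open>y \<in> carrier (V (p^e) G)\<close>
        by fastforce
    qed
  qed
  have pw: "\<forall>x \<in> one_plus_aug p e G. x [^]\<^bsub>V (p^e) G\<^esub> p = \<one>\<^bsub>V (p^e) G\<^esub>"
    using opa_pow_p by (auto simp: one_plus_aug_eq)
  have iso: "(V (p^e) G) Mod (one_plus_aug p e G) \<cong> V (p^(e-1)) G"
    using group_hom.FactGroup_iso[OF gh red_surj] kernel_eq by simp
  show ?thesis using red_hom kernel_eq sub cs pw card_opa iso by blast
qed



end
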